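(* Let $\mathcal H=(M,n,\mathcal R)$ be a BMS, let $S\subseteq\mathbb R^n$ be a convex set, and let $x_0\in S$. If there exists an $\mathcal H$-closed convex polytope $P$ with $x_0\in P\subseteq S$, then the scheduler has a positional winning strategy from $x_0$ in the schedulability game with safety set $S$; in fact there is a positional strategy under which, against every environment strategy, all visited states lie in $P$ and every chosen time delay is at least a fixed positive constant.
   Context: A multi-mode system is a tuple $\mathcal H=(M,n,\mathcal R)$ with $M$ a finite nonempty set of modes, $n\ge1$ variables, and $\mathcal R:M\to 2^{\mathbb R^n}$ giving nonempty rate sets; it is a BMS if each $\mathcal R(m)$ is a bounded convex polytope. A convex polytope $P\subseteq\mathbb R^n$ is $\mathcal H$-closed if for every vertex $c$ of $P$ there exist a mode $m\in M$ and $\tau>0$ such that $c+t\,r\in P$ for all $r\in\mathcal R(m)$ and all $t\in[0,\tau]$. The schedulability game from $x_0$: in round $i\ge 1$ the scheduler chooses $(m_i,t_i)\in M\times\mathbb R_{>0}$, the environment chooses $r_i\in\mathcal R(m_i)$, and $x_i=x_{i-1}+t_ir_i$. Scheduler strategies map finite histories to timed moves; environment strategies map a finite history and the current timed move $(m,t)$ to a rate in $\mathcal R(m)$; a strategy is positional if it depends only on the last state. A run is $S$-safe if $x_i\in S$ and $x_i+t r_{i+1}\in S$ for all $i\ge0$, $t\in[0,t_{i+1}]$, and non-Zeno if $\sum_it_i=\infty$. A scheduler strategy is winning if every resulting run is $S$-safe and non-Zeno. *)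

theory Defs
  imports "HOL-Analysis.Analysis"
begin

definition multimode :: "'m set \<Rightarrow> ('m \<Rightarrow> (real^'n) set) \<Rightarrow> bool" where
  "multimode M R \<longleftrightarrow> finite M \<and> M \<noteq> {} \<and> (\<forall>m\<in>M. R m \<noteq> {})"

definition BMS :: "'m set \<Rightarrow> ('m \<Rightarrow> (real^'n) set) \<Rightarrow> bool" where
  "BMS M R \<longleftrightarrow> multimode M R \<and> (\<forall>m\<in>M. polytope (R m))"

definition H_closed :: "'m set \<Rightarrow> ('m \<Rightarrow> (real^'n) set) \<Rightarrow> (real^'n) set \<Rightarrow> bool" where
  "H_closed M R P \<longleftrightarrow> polytope P \<and>
     (\<forall>c. c extreme_point_of P \<longrightarrow>
        (\<exists>m\<in>M. \<exists>\<tau>>0. \<forall>r\<in>R m. \<forall>t\<in>{0..\<tau>}. c + t *\<^sub>R r \<in> P))"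

text \<open>A finite history: initial state together with the list of completed rounds
  (m_i, t_i, r_i).\<close>
type_synonym ('m,'n) history = "(real^'n) \<times> ('m \<times> real \<times> (real^'n)) list"

type_synonym ('m,'n) sched_strategy = "('m,'n) history \<Rightarrow> 'm \<times> real"
type_synonym ('m,'n) env_strategy = "('m,'n) history \<Rightarrow> 'm \<times> real \<Rightarrow> real^'n"

definition last_state :: "('m,'n::finite) history \<Rightarrow> real^'n" where
  "last_state h = fst h + sum_list (map (\<lambda>(m,t,r). t *\<^sub>R r) (snd h))"

definition valid_sched :: "'m set \<Rightarrow> ('m,'n::finite) sched_strategy \<Rightarrow> bool" where
  "valid_sched M \<sigma> \<longleftrightarrow> (\<forall>h. fst (\<sigma> h) \<in> M \<and> snd (\<sigma> h) > 0)"

definition valid_env :: "'m set \<Rightarrow> ('m \<Rightarrow> (real^'n) set) \<Rightarrow> ('m,'n::finite) env_strategy \<Rightarrow> bool" where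
  "valid_env M R \<epsilon> \<longleftrightarrow> (\<forall>h m t. m \<in> M \<longrightarrow> \<epsilon> h (m,t) \<in> R m)"

definition positional :: "('m,'n::finite) sched_strategy \<Rightarrow> bool" where
  "positional \<sigma> \<longleftrightarrow> (\<exists>f. \<forall>h. \<sigma> h = f (last_state h))"

primrec rounds :: "('m,'n::finite) sched_strategy \<Rightarrow> ('m,'n) env_strategy \<Rightarrow> real^'n \<Rightarrow> nat
    \<Rightarrow> ('m \<times> real \<times> (real^'n)) list" where
  "rounds \<sigma> \<epsilon> x0 0 = []"
| "rounds \<sigma> \<epsilon> x0 (Suc k) =
     (let h = (x0, rounds \<sigma> \<epsilon> x0 k); (m,t) = \<sigma> h in rounds \<sigma> \<epsilon> x0 k @ [(m, t, \<epsilon> h (m,t))])"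

text \<open>State x_i, delay t_(i+1) and rate r_(i+1) of the run.\<close>
definition state :: "('m,'n::finite) sched_strategy \<Rightarrow> ('m,'n) env_strategy \<Rightarrow> real^'n \<Rightarrow> nat \<Rightarrow> real^'n" where
  "state \<sigma> \<epsilon> x0 i = last_state (x0, rounds \<sigma> \<epsilon> x0 i)"

definition delay :: "('m,'n::finite) sched_strategy \<Rightarrow> ('m,'n) env_strategy \<Rightarrow> real^'n \<Rightarrow> nat \<Rightarrow> real" where
  "delay \<sigma> \<epsilon> x0 i = fst (snd (last (rounds \<sigma> \<epsilon> x0 (Suc i))))"

definition rate :: "('m,'n::finite) sched_strategy \<Rightarrow> ('m,'n) env_strategy \<Rightarrow> real^'n \<Rightarrow> nat \<Rightarrow> real^'n" where
  "rate \<sigma> \<epsilon> x0 i = snd (snd (last (rounds \<sigma> \<epsilon> x0 (Suc i))))"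

definition safe_run :: "(real^'n) set \<Rightarrow> ('m,'n::finite) sched_strategy \<Rightarrow> ('m,'n) env_strategy \<Rightarrow> real^'n \<Rightarrow> bool" where
  "safe_run S \<sigma> \<epsilon> x0 \<longleftrightarrow> (\<forall>i. state \<sigma> \<epsilon> x0 i \<in> S \<and>
      (\<forall>t\<in>{0..delay \<sigma> \<epsilon> x0 i}. state \<sigma> \<epsilon> x0 i + t *\<^sub>R rate \<sigma> \<epsilon> x0 i \<in> S))"

definition non_zeno :: "('m,'n::finite) sched_strategy \<Rightarrow> ('m,'n) env_strategy \<Rightarrow> real^'n \<Rightarrow> bool" where
  "non_zeno \<sigma> \<epsilon> x0 \<longleftrightarrow> filterlim (\<lambda>k. \<Sum>i<k. delay \<sigma> \<epsilon> x0 i) at_top sequentially"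

definition winning :: "'m set \<Rightarrow> ('m \<Rightarrow> (real^'n) set) \<Rightarrow> (real^'n) set \<Rightarrow> real^'n
    \<Rightarrow> ('m,'n) sched_strategy \<Rightarrow> bool" where
  "winning M R S x0 \<sigma> \<longleftrightarrow> valid_sched M \<sigma> \<and>
     (\<forall>\<epsilon>. valid_env M R \<epsilon> \<longrightarrow> safe_run S \<sigma> \<epsilon> x0 \<and> non_zeno \<sigma> \<epsilon> x0)"

end

theory Submission
  imports Defs
begin

lemma key:
  fixes M :: "'m set" and R :: "'m \<Rightarrow> (real^'n) set" and P :: "(real^'n) set"
  assumes "H_closed M R P"
  shows "\<exists>\<delta>>0. \<forall>x\<in>P. \<exists>m\<in>M. \<forall>r\<in>R m. \<forall>t\<in>{0..\<delta>}. x + t *\<^sub>R r \<in> P"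
proof -
  have poly: "polytope P" using assms unfolding H_closed_def by blast
  have cvx: "convex P" using poly polytope_imp_convex by blast
  obtain V where V: "finite V" "P = convex hull V" using poly unfolding polytope_def by blast
  define E where "E = {c. c extreme_point_of P}"
  have EV: "E \<subseteq> V" unfolding E_def using V extreme_point_of_convex_hull by blast
  have finE: "finite E" using EV V finite_subset by blast
  have PE: "P = convex hull E" unfolding E_def using V Krein_Milman_polytope by blast
  have "\<forall>c\<in>E. \<exists>m\<in>M. \<exists>\<tau>>0. \<forall>r\<in>R m. \<forall>t\<in>{0..\<tau>}. c + t *\<^sub>R r \<in> P"
    using assms unfolding H_closed_def E_def by blast
  then obtain mo tau where mt: "\<And>c. c \<in> E \<Longrightarrow> mo c \<in> M \<and> tau c > 0 \<and>
      (\<forall>r\<in>R (mo c). \<forall>t\<in>{0..tau c}. c + t *\<^sub>R r \<in> P)"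
    by metis
  show ?thesis
  proof (cases "E = {}")
    case True
    then have "P = {}" using PE by simp
    then show ?thesis by (intro exI[of _ 1]) auto
  next
    case False
    define \<delta> where "\<delta> = Min (tau ` E) / real (card E)"
    have cardpos: "card E > 0" using False finE card_gt_0_iff by blast
    have minpos: "Min (tau ` E) > 0" using False finE mt by auto
    have dpos: "\<delta> > 0" unfolding \<delta>_def using cardpos minpos by simp
    have "\<forall>x\<in>P. \<exists>m\<in>M. \<forall>r\<in>R m. \<forall>t\<in>{0..\<delta>}. x + t *\<^sub>R r \<in> P"
    proof
      fix x assume "x \<in> P"
      then obtain u where u: "\<forall>y\<in>E. 0 \<le> u y" "sum u E = 1" "(\<Sum>y\<in>E. u y *\<^sub>R y) = x"
        using PE convex_hull_finite[OF finE] by blast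
      have "\<exists>j\<in>E. u j \<ge> 1 / real (card E)"
      proof (rule ccontr)
        assume "\<not> ?thesis"
        then have "\<And>j. j \<in> E \<Longrightarrow> u j < 1 / real (card E)" by force
        then have "sum u E < (\<Sum>j\<in>E. 1 / real (card E))"
          by (intro sum_strict_mono[OF finE False]) simp
        also have "\<dots> = 1" using cardpos by simp
        finally show False using u by simp
      qed
      then obtain j where j: "j \<in> E" "u j \<ge> 1 / real (card E)" by blast
      have ujpos: "u j > 0" using j cardpos by (smt (verit) divide_pos_pos of_nat_0_less_iff)
      show "\<exists>m\<in>M. \<forall>r\<in>R m. \<forall>t\<in>{0..\<delta>}. x + t *\<^sub>R r \<in> P"
      proof (intro bexI[of _ "mo j"] ballI)
        show "mo j \<in> M" using mt j by blast
        fix r t assume r: "r \<in> R (mo j)" and t: "t \<in> {0..\<delta>}"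
        have "t / u j \<le> \<delta> * real (card E)"
        proof -
          have "t / u j \<le> \<delta> / u j" using t ujpos by (simp add: divide_right_mono)
          also have "\<dots> \<le> \<delta> / (1 / real (card E))"
            using j ujpos dpos cardpos by (intro divide_left_mono) auto
          also have "\<dots> = \<delta> * real (card E)" by simp
          finally show ?thesis .
        qed
        also have "\<dots> = Min (tau ` E)" unfolding \<delta>_def using cardpos by simp
        also have "\<dots> \<le> tau j" using finE j by simp
        finally have tj: "t / u j \<le> tau j" .
        have tj0: "t / u j \<ge> 0" using t ujpos by simp
        define y where "y i = (if i = j then j + (t / u j) *\<^sub>R r else i)" for i
        have yP: "\<And>i. i \<in> E \<Longrightarrow> y i \<in> P"
        proof -
          fix i assume i: "i \<in> E"
          show "y i \<in> P"
          proof (cases "i = j")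
            case True
            then show ?thesis using mt[OF j(1)] r tj tj0 unfolding y_def by auto
          next
            case False
            then show ?thesis using i PE hull_subset[of E convex] unfolding y_def by auto
          qed
        qed
        have "(\<Sum>i\<in>E. u i *\<^sub>R y i) = (\<Sum>i\<in>E. u i *\<^sub>R i + (if i = j then t *\<^sub>R r else 0))"
          using ujpos by (intro sum.cong) (auto simp: y_def scaleR_add_right)
        also have "\<dots> = x + t *\<^sub>R r"
          using u j finE by (simp add: sum.distrib)
        finally have "(\<Sum>i\<in>E. u i *\<^sub>R y i) = x + t *\<^sub>R r" .
        moreover have "(\<Sum>i\<in>E. u i *\<^sub>R y i) \<in> P"
          using convex_sum[OF finE cvx] u yP by blast
        ultimately show "x + t *\<^sub>R r \<in> P" by simp
      qed
    qed
    then show ?thesis using dpos by blast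
  qed
qed

lemma last_rounds:
  "last (rounds \<sigma> \<epsilon> x0 (Suc i)) =
     (fst (\<sigma> (x0, rounds \<sigma> \<epsilon> x0 i)), snd (\<sigma> (x0, rounds \<sigma> \<epsilon> x0 i)),
      \<epsilon> (x0, rounds \<sigma> \<epsilon> x0 i) (\<sigma> (x0, rounds \<sigma> \<epsilon> x0 i)))"
  by (simp add: Let_def split: prod.split)

lemma state_Suc:
  "state \<sigma> \<epsilon> x0 (Suc i) = state \<sigma> \<epsilon> x0 i + delay \<sigma> \<epsilon> x0 i *\<^sub>R rate \<sigma> \<epsilon> x0 i"
  unfolding state_def delay_def rate_def last_rounds
  by (simp add: Let_def last_state_def split: prod.split)

lemma state_0: "state \<sigma> \<epsilon> x0 0 = x0"
  by (simp add: state_def last_state_def)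

theorem proposition1:
  fixes M :: "'m set" and R :: "'m \<Rightarrow> (real^'n) set"
    and S :: "(real^'n) set" and x0 :: "real^'n" and P :: "(real^'n) set"
  assumes "BMS M R" and "convex S" and "x0 \<in> S"
    and "H_closed M R P" and "x0 \<in> P" and "P \<subseteq> S"
  shows "\<exists>\<sigma>. positional \<sigma> \<and> winning M R S x0 \<sigma> \<and>
             (\<exists>\<delta>>0. \<forall>\<epsilon>. valid_env M R \<epsilon> \<longrightarrow>
                (\<forall>i. state \<sigma> \<epsilon> x0 i \<in> P \<and> delay \<sigma> \<epsilon> x0 i \<ge> \<delta>))"
proof -
  obtain \<delta> where dpos: "\<delta> > 0" and K: "\<forall>x\<in>P. \<exists>m\<in>M. \<forall>r\<in>R m. \<forall>t\<in>{0..\<delta>}. x + t *\<^sub>R r \<in> P"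
    using key[OF assms(4)] by blast
  obtain m0 where m0: "m0 \<in> M" using assms(1) unfolding BMS_def multimode_def by blast
  define Q where "Q x m \<longleftrightarrow> m \<in> M \<and> (\<forall>r\<in>R m. \<forall>t\<in>{0..\<delta>}. x + t *\<^sub>R r \<in> P)" for x m
  define g where "g x = (if \<exists>m. Q x m then SOME m. Q x m else m0)" for x
  have gM: "g x \<in> M" for x
    unfolding g_def using m0 by (auto intro: someI2_ex simp: Q_def)
  have gP: "x \<in> P \<Longrightarrow> \<forall>r\<in>R (g x). \<forall>t\<in>{0..\<delta>}. x + t *\<^sub>R r \<in> P" for x
  proof -
    assume "x \<in> P"
    then have ex: "\<exists>m. Q x m" using K unfolding Q_def by blast
    then have "Q x (g x)" unfolding g_def by (simp add: someI_ex)
    then show ?thesis unfolding Q_def by blast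
  qed
  define \<sigma> :: "('m,'n) sched_strategy" where "\<sigma> h = (g (last_state h), \<delta>)" for h
  have pos: "positional \<sigma>" unfolding positional_def \<sigma>_def by (intro exI[of _ "\<lambda>x. (g x, \<delta>)"]) simp
  have vs: "valid_sched M \<sigma>" unfolding valid_sched_def \<sigma>_def using gM dpos by simp
  have main: "state \<sigma> \<epsilon> x0 i \<in> P \<and> delay \<sigma> \<epsilon> x0 i = \<delta> \<and>
      (\<forall>t\<in>{0..delay \<sigma> \<epsilon> x0 i}. state \<sigma> \<epsilon> x0 i + t *\<^sub>R rate \<sigma> \<epsilon> x0 i \<in> P)"
    if ve: "valid_env M R \<epsilon>" for \<epsilon> i
  proof -
    have d: "delay \<sigma> \<epsilon> x0 k = \<delta>" for k
      unfolding delay_def last_rounds \<sigma>_def by simp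
    have rr: "rate \<sigma> \<epsilon> x0 k \<in> R (g (state \<sigma> \<epsilon> x0 k))" for k
      unfolding rate_def last_rounds state_def using ve gM
      by (simp add: \<sigma>_def valid_env_def)
    have sP: "state \<sigma> \<epsilon> x0 k \<in> P" for k
    proof (induction k)
      case 0 then show ?case using assms(5) state_0 by metis
    next
      case (Suc k)
      then show ?case using gP[OF Suc] rr[of k] d[of k] dpos state_Suc[of \<sigma> \<epsilon> x0 k] by auto
    qed
    show ?thesis using sP[of i] d[of i] gP[OF sP[of i]] rr[of i] by auto
  qed
  have win: "winning M R S x0 \<sigma>"
    unfolding winning_def
  proof (intro conjI vs allI impI)
    fix \<epsilon> assume ve: "valid_env M R \<epsilon>"
    show "safe_run S \<sigma> \<epsilon> x0" unfolding safe_run_def using main[OF ve] assms(6) by blast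
    have "(\<lambda>k. \<Sum>i<k. delay \<sigma> \<epsilon> x0 i) = (\<lambda>k. \<delta> * real k)"
      using main[OF ve] by (simp add: mult.commute)
    moreover have "filterlim (\<lambda>k. \<delta> * real k) at_top sequentially"
      by (rule filterlim_tendsto_pos_mult_at_top[OF tendsto_const dpos filterlim_real_sequentially])
    ultimately show "non_zeno \<sigma> \<epsilon> x0" unfolding non_zeno_def by simp
  qed
  show ?thesis using pos win main dpos by (intro exI[of _ \<sigma>]) auto
qed

end
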